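(* Let $\mathbf{B}$ be a binomial ring and let $x$ be an element of a divided power algebra over $\mathbf{B}$. Then for all $a\in\mathbf{B}$ and all positive integers $m$, $$a^m x^{[m]}=\sum_{k=1}^\infty\binom ak\sum_{\substack{g_1+\cdots+g_k=m\\ g_i\in\mathbb Z^+}}x^{[g_1]}\cdots x^{[g_k]}.$$
   Context: A binomial ring is a commutative unital ring, torsion-free as an abelian group, such that $\binom ak=a(a-1)\cdots(a-k+1)/k!\in\mathbf{B}$ for all $a\in\mathbf{B}$, $k\ge0$. In a divided power algebra, $x^{[g]}$ denotes the $g$-th divided power of $x$ (morally $x^g/g!$), satisfying $x^{[i]}x^{[j]}=\binom{i+j}ix^{[i+j]}$. The sum over $k$ is finite since the inner sum is empty for $k>m$. *)

theory Defs
  imports Main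
begin

text \<open>Binomial ring: commutative unital ring, torsion-free as an abelian group,
  such that a(a-1)...(a-k+1)/k! lies in the ring for all a and k, i.e. the falling
  product is divisible by k! (the quotient is unique by torsion-freeness).\<close>

definition binomial_ring :: "'b::comm_ring_1 itself \<Rightarrow> bool" where
  "binomial_ring _ \<longleftrightarrow>
     (\<forall>(n::nat) (a::'b). 0 < n \<and> of_nat n * a = 0 \<longrightarrow> a = 0) \<and>
     (\<forall>(a::'b) (k::nat). \<exists>b::'b. of_nat (fact k) * b = (\<Prod>i<k. a - of_nat i))"

definition ring_binom :: "'b::comm_ring_1 \<Rightarrow> nat \<Rightarrow> 'b" where
  "ring_binom a k = (THE b. of_nat (fact k) * b = (\<Prod>i<k. a - of_nat i))"

text \<open>Structure map of an algebra over B: a unital ring homomorphism B \<rightarrow> A.\<close>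
definition ring_hom_map :: "('b::comm_ring_1 \<Rightarrow> 'a::comm_ring_1) \<Rightarrow> bool" where
  "ring_hom_map \<phi> \<longleftrightarrow> \<phi> 1 = 1 \<and> (\<forall>a b. \<phi> (a + b) = \<phi> a + \<phi> b) \<and>
     (\<forall>a b. \<phi> (a * b) = \<phi> a * \<phi> b)"

text \<open>Divided power structure (Berthelot) on an ideal I of a commutative ring A;
  \<gamma> n x is the divided power x^[n].\<close>
definition divided_power_structure :: "'a::comm_ring_1 set \<Rightarrow> (nat \<Rightarrow> 'a \<Rightarrow> 'a) \<Rightarrow> bool" where
  "divided_power_structure I \<gamma> \<longleftrightarrow>
     0 \<in> I \<and> (\<forall>x\<in>I. \<forall>y\<in>I. x + y \<in> I) \<and> (\<forall>r. \<forall>x\<in>I. r * x \<in> I) \<and>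
     (\<forall>x\<in>I. \<gamma> 0 x = 1) \<and> (\<forall>x\<in>I. \<gamma> 1 x = x) \<and>
     (\<forall>x\<in>I. \<forall>n\<ge>1. \<gamma> n x \<in> I) \<and>
     (\<forall>x\<in>I. \<forall>y\<in>I. \<forall>n. \<gamma> n (x + y) = (\<Sum>i\<le>n. \<gamma> i x * \<gamma> (n - i) y)) \<and>
     (\<forall>r. \<forall>x\<in>I. \<forall>n. \<gamma> n (r * x) = r ^ n * \<gamma> n x) \<and>
     (\<forall>x\<in>I. \<forall>i j. \<gamma> i x * \<gamma> j x = of_nat ((i + j) choose i) * \<gamma> (i + j) x) \<and>
     (\<forall>x\<in>I. \<forall>p q. 1 \<le> q \<longrightarrow>
        \<gamma> p (\<gamma> q x) = of_nat (fact (p * q) div (fact p * fact q ^ p)) * \<gamma> (p * q) x)"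

end

theory Submission
  imports Defs "HOL-Combinatorics.Stirling"
begin


definition ff :: "'b::comm_ring_1 \<Rightarrow> nat \<Rightarrow> 'b" where
  "ff a k = (\<Prod>i<k. a - of_nat i)"

lemma ff_Suc: "ff a (Suc k) = ff a k * (a - of_nat k)"
  by (simp add: ff_def)

lemma a_ff: "a * ff a k = ff a (Suc k) + of_nat k * ff a k"
  by (simp add: ff_Suc algebra_simps)

lemma pow_stirling: "(a::'b::comm_ring_1) ^ m = (\<Sum>k\<le>m. of_nat (Stirling m k) * ff a k)"
proof (induction m)
  case 0 then show ?case by (simp add: ff_def)
next
  case (Suc m)
  have "a ^ Suc m = (\<Sum>k\<le>m. of_nat (Stirling m k) * (a * ff a k))"
    by (simp add: Suc sum_distrib_left algebra_simps)
  also have "\<dots> = (\<Sum>k\<le>m. of_nat (Stirling m k) * ff a (Suc k))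
       + (\<Sum>k\<le>m. of_nat k * of_nat (Stirling m k) * ff a k)"
    by (simp add: a_ff algebra_simps sum.distrib)
  also have "(\<Sum>k\<le>m. of_nat k * of_nat (Stirling m k) * ff a k)
     = (\<Sum>k\<le>Suc m. of_nat k * of_nat (Stirling m k) * (ff a k::'b))"
    by simp
  also have "\<dots> = (\<Sum>k\<le>m. of_nat (Suc k) * of_nat (Stirling m (Suc k)) * ff a (Suc k))"
    by (subst sum.atMost_Suc_shift) simp
  finally have "a ^ Suc m = (\<Sum>k\<le>m. of_nat (Stirling (Suc m) (Suc k)) * ff a (Suc k))"
    by (simp add: sum.distrib[symmetric] algebra_simps)
  also have "\<dots> = (\<Sum>k\<le>Suc m. of_nat (Stirling (Suc m) k) * ff a k)"
    by (subst sum.atMost_Suc_shift) simp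
  finally show ?case .
qed



lemma G_stirling: "(\<Sum>j<m. (m choose j) * Stirling j k) = Suc k * Stirling m (Suc k)"
proof (induction m arbitrary: k)
  case 0 then show ?case by simp
next
  case (Suc m)
  have "(\<Sum>j<Suc m. (Suc m choose j) * Stirling j k)
      = Stirling 0 k + (\<Sum>i<m. (Suc m choose Suc i) * Stirling (Suc i) k)"
    by (subst sum.lessThan_Suc_shift) simp
  also have "\<dots> = Stirling 0 k + (\<Sum>i<m. (m choose Suc i) * Stirling (Suc i) k)
      + (\<Sum>i<m. (m choose i) * Stirling (Suc i) k)"
    by (simp add: sum.distrib algebra_simps)
  also have "Stirling 0 k + (\<Sum>i<m. (m choose Suc i) * Stirling (Suc i) k)
      = (\<Sum>j<Suc m. (m choose j) * Stirling j k)"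
    by (subst sum.lessThan_Suc_shift) simp
  also have "\<dots> = (\<Sum>j<m. (m choose j) * Stirling j k) + Stirling m k"
    by simp
  finally have eq: "(\<Sum>j<Suc m. (Suc m choose j) * Stirling j k)
     = Suc k * Stirling m (Suc k) + Stirling m k + (\<Sum>i<m. (m choose i) * Stirling (Suc i) k)"
    using Suc by simp
  show ?case
  proof (cases k)
    case 0
    then show ?thesis using eq by simp
  next
    case (Suc k')
    have "(\<Sum>i<m. (m choose i) * Stirling (Suc i) k)
        = Suc k' * (\<Sum>i<m. (m choose i) * Stirling i k) + (\<Sum>i<m. (m choose i) * Stirling i k')"
      by (simp add: Suc sum.distrib sum_distrib_left algebra_simps)
    also have "\<dots> = Suc k' * (Suc k * Stirling m (Suc k)) + Suc k' * Stirling m k"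
      using Suc.IH[of k] Suc.IH[of k'] \<open>k = Suc k'\<close> by simp
    finally show ?thesis using eq \<open>k = Suc k'\<close> by (simp add: algebra_simps)
  qed
qed

definition comps :: "nat \<Rightarrow> nat \<Rightarrow> nat list set" where
  "comps m k = {gs. length gs = k \<and> (\<forall>g\<in>set gs. 0 < g) \<and> sum_list gs = m}"

fun mult :: "nat list \<Rightarrow> nat" where
  "mult [] = 1"
| "mult (g # gs) = (g + sum_list gs choose g) * mult gs"

lemma finite_comps: "finite (comps m k)"
proof -
  have "comps m k \<subseteq> {gs. set gs \<subseteq> {..m} \<and> length gs = k}"
    unfolding comps_def using member_le_sum_list by fastforce
  moreover have "finite {gs. set gs \<subseteq> {..m} \<and> length gs = k}"
    by (rule finite_lists_length_eq) simp
  ultimately show ?thesis by (rule finite_subset)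
qed

lemma comps_0: "comps m 0 = (if m = 0 then {[]} else {})"
  by (auto simp: comps_def)

lemma comps_Suc: "comps m (Suc k) = (\<lambda>(g,gs). g # gs) ` (SIGMA g:{1..m}. comps (m-g) k)"
proof
  show "comps m (Suc k) \<subseteq> (\<lambda>(g,gs). g # gs) ` (SIGMA g:{1..m}. comps (m-g) k)"
  proof
    fix gs assume "gs \<in> comps m (Suc k)"
    then obtain g gs' where gs: "gs = g # gs'" "length gs' = k" "0 < g" "\<forall>h\<in>set gs'. 0 < h"
      "g + sum_list gs' = m"
      unfolding comps_def by (cases gs) auto
    then have "(g, gs') \<in> (SIGMA g:{1..m}. comps (m-g) k)" by (auto simp: comps_def)
    then show "gs \<in> (\<lambda>(g,gs). g # gs) ` (SIGMA g:{1..m}. comps (m-g) k)"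
      using gs(1) by force
  qed
next
  show "(\<lambda>(g,gs). g # gs) ` (SIGMA g:{1..m}. comps (m-g) k) \<subseteq> comps m (Suc k)"
    by (auto simp: comps_def)
qed

definition F :: "nat \<Rightarrow> nat \<Rightarrow> nat" where
  "F m k = (\<Sum>gs\<in>comps m k. mult gs)"

lemma F_Suc: "F m (Suc k) = (\<Sum>g\<in>{1..m}. (m choose g) * F (m - g) k)"
proof -
  have inj: "inj_on (\<lambda>(g,gs). g # gs) (SIGMA g:{1..m}. comps (m-g) k)"
    by (auto simp: inj_on_def)
  have "F m (Suc k) = (\<Sum>(g,gs)\<in>(SIGMA g:{1..m}. comps (m-g) k). mult (g # gs))"
    unfolding F_def comps_Suc by (subst sum.reindex[OF inj]) (simp add: comp_def case_prod_unfold)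
  also have "\<dots> = (\<Sum>g\<in>{1..m}. \<Sum>gs\<in>comps (m-g) k. mult (g # gs))"
    by (subst sum.Sigma) (auto simp: finite_comps)
  also have "\<dots> = (\<Sum>g\<in>{1..m}. (m choose g) * F (m - g) k)"
  proof (rule sum.cong[OF refl])
    fix g assume g: "g \<in> {1..m}"
    have "(\<Sum>gs\<in>comps (m-g) k. mult (g # gs)) = (\<Sum>gs\<in>comps (m-g) k. (m choose g) * mult gs)"
      using g by (intro sum.cong refl) (auto simp: comps_def)
    then show "(\<Sum>gs\<in>comps (m-g) k. mult (g # gs)) = (m choose g) * F (m - g) k"
      by (simp add: F_def sum_distrib_left)
  qed
  finally show ?thesis .
qed

lemma F_stirling: "F m k = fact k * Stirling m k"
proof (induction k arbitrary: m)
  case 0 then show ?case by (cases m) (auto simp: F_def comps_0)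
next
  case (Suc k)
  have "F m (Suc k) = (\<Sum>g\<in>{1..m}. (m choose (m - g)) * (fact k * Stirling (m - g) k))"
    by (simp add: F_Suc Suc binomial_symmetric[symmetric])
  also have "\<dots> = (\<Sum>j<m. (m choose j) * (fact k * Stirling j k))"
    by (rule sum.reindex_bij_witness[of _ "\<lambda>j. m - j" "\<lambda>g. m - g"]) auto
  also have "\<dots> = fact k * (\<Sum>j<m. (m choose j) * Stirling j k)"
    by (simp add: sum_distrib_left algebra_simps)
  also have "\<dots> = fact (Suc k) * Stirling m (Suc k)"
    by (simp add: G_stirling algebra_simps)
  finally show ?case .
qed


lemma phi_props:
  assumes "ring_hom_map \<phi>"
  shows "\<phi> 0 = 0" "\<phi> (of_nat n) = of_nat n" "\<phi> (a ^ k) = \<phi> a ^ k"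
    "\<phi> (sum f A) = (\<Sum>i\<in>A. \<phi> (f i))"
proof -
  have add: "\<And>a b. \<phi> (a + b) = \<phi> a + \<phi> b" and mul: "\<And>a b. \<phi> (a * b) = \<phi> a * \<phi> b"
    and one: "\<phi> 1 = 1" using assms by (auto simp: ring_hom_map_def)
  show z: "\<phi> 0 = 0" using add[of 0 0] by simp
  show "\<phi> (of_nat n) = of_nat n" by (induction n) (simp_all add: z add one)
  show "\<phi> (a ^ k) = \<phi> a ^ k" by (induction k) (simp_all add: one mul)
  show "\<phi> (sum f A) = (\<Sum>i\<in>A. \<phi> (f i))"
    by (induction A rule: infinite_finite_induct) (simp_all add: z add)
qed

lemma ring_binom_prop:
  assumes "binomial_ring TYPE('b::comm_ring_1)"
  shows "of_nat (fact k) * ring_binom (a::'b) k = ff a k"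
proof -
  have tf: "\<And>(n::nat) (a::'b). 0 < n \<Longrightarrow> of_nat n * a = 0 \<Longrightarrow> a = 0"
    and ex: "\<exists>b::'b. of_nat (fact k) * b = (\<Prod>i<k. a - of_nat i)"
    using assms by (auto simp: binomial_ring_def)
  have "\<exists>!b::'b. of_nat (fact k) * b = (\<Prod>i<k. a - of_nat i)"
  proof -
    obtain b where b: "of_nat (fact k) * b = (\<Prod>i<k. a - of_nat i)" using ex by blast
    have "c = b" if "of_nat (fact k) * c = (\<Prod>i<k. a - of_nat i)" for c
    proof -
      have "of_nat (fact k) * (c - b) = 0" using b that by (simp add: algebra_simps)
      then show ?thesis using tf[of "fact k" "c - b"] by simp
    qed
    then show ?thesis using b by blast
  qed
  then show ?thesis unfolding ring_binom_def ff_def by (rule theI')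
qed

lemma gamma_prod:
  assumes "divided_power_structure I \<gamma>" "x \<in> I"
  shows "prod_list (map (\<lambda>g. \<gamma> g x) gs) = of_nat (mult gs) * \<gamma> (sum_list gs) x"
proof (induction gs)
  case Nil then show ?case using assms by (simp add: divided_power_structure_def)
next
  case (Cons g gs)
  have "\<gamma> g x * \<gamma> (sum_list gs) x = of_nat ((g + sum_list gs) choose g) * \<gamma> (g + sum_list gs) x"
    using assms by (simp add: divided_power_structure_def)
  then show ?case using Cons by (simp add: algebra_simps)
qed

theorem mainTheorem20:
  fixes \<phi> :: "'b::comm_ring_1 \<Rightarrow> 'a::comm_ring_1"
    and I :: "'a set" and \<gamma> :: "nat \<Rightarrow> 'a \<Rightarrow> 'a"
    and x :: 'a and a :: 'b and m :: nat
  assumes "binomial_ring TYPE('b)"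
    and "ring_hom_map \<phi>"
    and "divided_power_structure I \<gamma>"
    and "x \<in> I"
    and "0 < m"
  shows "\<phi> a ^ m * \<gamma> m x =
    (\<Sum>k\<in>{1..m}. \<phi> (ring_binom a k) *
       (\<Sum>gs\<in>{gs. length gs = k \<and> (\<forall>g\<in>set gs. 0 < g) \<and> sum_list gs = m}.
          prod_list (map (\<lambda>g. \<gamma> g x) gs)))"
proof -
  have mul: "\<And>a b. \<phi> (a * b) = \<phi> a * \<phi> b" using assms(2) by (auto simp: ring_hom_map_def)
  have inner: "(\<Sum>gs\<in>{gs. length gs = k \<and> (\<forall>g\<in>set gs. 0 < g) \<and> sum_list gs = m}.
          prod_list (map (\<lambda>g. \<gamma> g x) gs)) = of_nat (F m k) * \<gamma> m x" for k
  proof -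
    have "(\<Sum>gs\<in>{gs. length gs = k \<and> (\<forall>g\<in>set gs. 0 < g) \<and> sum_list gs = m}.
          prod_list (map (\<lambda>g. \<gamma> g x) gs)) = (\<Sum>gs\<in>comps m k. of_nat (mult gs) * \<gamma> m x)"
      unfolding comps_def using gamma_prod[OF assms(3,4)] by (intro sum.cong) auto
    then show ?thesis by (simp add: F_def sum_distrib_right)
  qed
  have trm: "\<phi> (ring_binom a k) * of_nat (F m k) = \<phi> (of_nat (Stirling m k) * ff a k)" for k
  proof -
    have "\<phi> (of_nat (Stirling m k) * ff a k) = \<phi> (of_nat (Stirling m k) * of_nat (fact k) * ring_binom a k)"
      using ring_binom_prop[OF assms(1), of k a] by (simp add: mult.assoc)
    also have "\<dots> = of_nat (F m k) * \<phi> (ring_binom a k)"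
      by (simp add: mul phi_props[OF assms(2)] F_stirling algebra_simps)
    finally show ?thesis by (simp add: algebra_simps)
  qed
  have "{..m} = insert 0 {1..m}" by auto
  then have "a ^ m = of_nat (Stirling m 0) * ff a 0 + (\<Sum>k\<in>{1..m}. of_nat (Stirling m k) * ff a k)"
    by (simp add: pow_stirling[of a m])
  also have "of_nat (Stirling m 0) = (0::'b)" using assms(5) by (cases m) auto
  finally have am: "a ^ m = (\<Sum>k\<in>{1..m}. of_nat (Stirling m k) * ff a k)" by simp
  have "(\<Sum>k\<in>{1..m}. \<phi> (ring_binom a k) *
       (\<Sum>gs\<in>{gs. length gs = k \<and> (\<forall>g\<in>set gs. 0 < g) \<and> sum_list gs = m}.
          prod_list (map (\<lambda>g. \<gamma> g x) gs)))
     = (\<Sum>k\<in>{1..m}. \<phi> (of_nat (Stirling m k) * ff a k)) * \<gamma> m x"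
    by (simp add: inner sum_distrib_right trm[symmetric] mult.assoc)
  also have "\<dots> = \<phi> a ^ m * \<gamma> m x"
    using arg_cong[OF am, of \<phi>] by (simp only: phi_props[OF assms(2)])
  finally show ?thesis by simp
qed

end
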